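(* Let $(X,\rho)$ be a locally bounded $F$-space and $(Y,d)$ a metric vector space with translation-invariant non-decreasing metric $d$. Let $T:X\to Y$ and $T_n:X\to Y$ ($n\in\mathbb{N}$) be continuous linear operators. Then the following are equivalent: (i) $\{T_n\}$ converges almost arbitrarily slowly to $T$; (ii) $\{T_n\}$ converges pointwise to $T$ but does not converge to $T$ in the topology of bounded convergence.
   Context: An $F$-space is a complete metric vector space with translation-invariant metric. $d$ is non-decreasing if $d(\alpha y,0)\le d(y,0)$ for $0\le\alpha\le1$. $T_n$ converges almost arbitrarily slowly to $T$ if (C1) $\lim_n d(T_nx,Tx)=0$ for all $x\in X$ and (C2) for every non-increasing sequence $\{\varepsilon_n\}$ of nonnegative reals tending to $0$ there exists $x\in X$ with $d(T_nx,Tx)\ge\varepsilon_n$ for infinitely many $n$. The topology of bounded convergence is the topology of uniform convergence on bounded subsets of $X$, where $A\subseteq X$ is bounded if for every $r>0$ there is $\lambda>0$ with $A\subseteq\lambda\{x:\rho(x,0)\le r\}$. *)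

theory Defs
  imports "HOL-Analysis.Analysis"
begin

definition is_metric :: "('a \<Rightarrow> 'a \<Rightarrow> real) \<Rightarrow> bool" where
  "is_metric \<rho> \<longleftrightarrow>
     (\<forall>x y. 0 \<le> \<rho> x y) \<and> (\<forall>x y. \<rho> x y = 0 \<longleftrightarrow> x = y) \<and>
     (\<forall>x y. \<rho> x y = \<rho> y x) \<and> (\<forall>x y z. \<rho> x z \<le> \<rho> x y + \<rho> y z)"

definition translation_invariant :: "('a::real_vector \<Rightarrow> 'a \<Rightarrow> real) \<Rightarrow> bool" where
  "translation_invariant \<rho> \<longleftrightarrow> (\<forall>x y z. \<rho> (x + z) (y + z) = \<rho> x y)"

definition metric_vector_space :: "('a::real_vector \<Rightarrow> 'a \<Rightarrow> real) \<Rightarrow> bool" where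
  "metric_vector_space \<rho> \<longleftrightarrow> is_metric \<rho> \<and> translation_invariant \<rho> \<and>
     (\<forall>xs ys x y. (\<lambda>n. \<rho> (xs n) x) \<longlonglongrightarrow> 0 \<and> (\<lambda>n. \<rho> (ys n) y) \<longlonglongrightarrow> 0
        \<longrightarrow> (\<lambda>n. \<rho> (xs n + ys n) (x + y)) \<longlonglongrightarrow> 0) \<and>
     (\<forall>(as :: nat \<Rightarrow> real) xs a x. as \<longlonglongrightarrow> a \<and> (\<lambda>n. \<rho> (xs n) x) \<longlonglongrightarrow> 0
        \<longrightarrow> (\<lambda>n. \<rho> (as n *\<^sub>R xs n) (a *\<^sub>R x)) \<longlonglongrightarrow> 0)"

definition metric_complete :: "('a \<Rightarrow> 'a \<Rightarrow> real) \<Rightarrow> bool" where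
  "metric_complete \<rho> \<longleftrightarrow>
     (\<forall>s. (\<forall>e>0. \<exists>N. \<forall>m\<ge>N. \<forall>n\<ge>N. \<rho> (s m) (s n) < e) \<longrightarrow> (\<exists>x. (\<lambda>n. \<rho> (s n) x) \<longlonglongrightarrow> 0))"

definition F_space :: "('a::real_vector \<Rightarrow> 'a \<Rightarrow> real) \<Rightarrow> bool" where
  "F_space \<rho> \<longleftrightarrow> metric_vector_space \<rho> \<and> metric_complete \<rho>"

definition non_decreasing_metric :: "('a::real_vector \<Rightarrow> 'a \<Rightarrow> real) \<Rightarrow> bool" where
  "non_decreasing_metric d \<longleftrightarrow> (\<forall>y \<alpha>. 0 \<le> \<alpha> \<and> \<alpha> \<le> 1 \<longrightarrow> d (\<alpha> *\<^sub>R y) 0 \<le> d y 0)"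

definition metric_vs_bounded :: "('a::real_vector \<Rightarrow> 'a \<Rightarrow> real) \<Rightarrow> 'a set \<Rightarrow> bool" where
  "metric_vs_bounded \<rho> A \<longleftrightarrow>
     (\<forall>r>0. \<exists>c>0. A \<subseteq> (\<lambda>x. c *\<^sub>R x) ` {x. \<rho> x 0 \<le> r})"

definition locally_bounded :: "('a::real_vector \<Rightarrow> 'a \<Rightarrow> real) \<Rightarrow> bool" where
  "locally_bounded \<rho> \<longleftrightarrow>
     (\<exists>U. metric_vs_bounded \<rho> U \<and> (\<exists>r>0. {x. \<rho> x 0 < r} \<subseteq> U))"

definition continuous_op :: "('a \<Rightarrow> 'a \<Rightarrow> real) \<Rightarrow> ('b \<Rightarrow> 'b \<Rightarrow> real) \<Rightarrow> ('a \<Rightarrow> 'b) \<Rightarrow> bool" where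
  "continuous_op \<rho> d T \<longleftrightarrow>
     (\<forall>s x. (\<lambda>n. \<rho> (s n) x) \<longlonglongrightarrow> 0 \<longrightarrow> (\<lambda>n. d (T (s n)) (T x)) \<longlonglongrightarrow> 0)"

definition pointwise_conv :: "('b \<Rightarrow> 'b \<Rightarrow> real) \<Rightarrow> (nat \<Rightarrow> 'a \<Rightarrow> 'b) \<Rightarrow> ('a \<Rightarrow> 'b) \<Rightarrow> bool" where
  "pointwise_conv d Ts T \<longleftrightarrow> (\<forall>x. (\<lambda>n. d (Ts n x) (T x)) \<longlonglongrightarrow> 0)"

definition almost_arbitrarily_slowly ::
    "('b \<Rightarrow> 'b \<Rightarrow> real) \<Rightarrow> (nat \<Rightarrow> 'a \<Rightarrow> 'b) \<Rightarrow> ('a \<Rightarrow> 'b) \<Rightarrow> bool" where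
  "almost_arbitrarily_slowly d Ts T \<longleftrightarrow>
     pointwise_conv d Ts T \<and>
     (\<forall>\<epsilon> :: nat \<Rightarrow> real. antimono \<epsilon> \<and> (\<forall>n. 0 \<le> \<epsilon> n) \<and> \<epsilon> \<longlonglongrightarrow> 0 \<longrightarrow>
        (\<exists>x. \<exists>\<^sub>\<infinity>n. d (Ts n x) (T x) \<ge> \<epsilon> n))"

definition bounded_conv ::
    "('a::real_vector \<Rightarrow> 'a \<Rightarrow> real) \<Rightarrow> ('b \<Rightarrow> 'b \<Rightarrow> real) \<Rightarrow> (nat \<Rightarrow> 'a \<Rightarrow> 'b) \<Rightarrow> ('a \<Rightarrow> 'b) \<Rightarrow> bool" where
  "bounded_conv \<rho> d Ts T \<longleftrightarrow>
     (\<forall>A. metric_vs_bounded \<rho> A \<longrightarrow>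
        (\<forall>e>0. \<exists>N. \<forall>n\<ge>N. \<forall>x\<in>A. d (Ts n x) (T x) < e))"

end

theory Submission
  imports Defs
begin

lemma tinv_eq:
  assumes "translation_invariant \<rho>"
  shows "\<rho> x y = \<rho> (x - y) 0"
  using assms unfolding translation_invariant_def
  by (metis add.left_neutral diff_add_cancel)

lemma tinv_tri:
  assumes "is_metric \<rho>" "translation_invariant \<rho>"
  shows "\<rho> (x + y) 0 \<le> \<rho> x 0 + \<rho> y 0"
proof -
  have "\<rho> (x + y) 0 \<le> \<rho> (x + y) y + \<rho> y 0" using assms(1) unfolding is_metric_def by blast
  moreover have "\<rho> (x + y) y = \<rho> x 0" using assms(2) unfolding translation_invariant_def
    by (metis add.left_neutral)
  ultimately show ?thesis by simp
qed

lemma tinv_neg: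
  assumes "is_metric \<rho>" "translation_invariant \<rho>"
  shows "\<rho> (- x) 0 = \<rho> x 0"
proof -
  have "\<rho> (- x) 0 = \<rho> (-x + x) (0 + x)" using assms(2) unfolding translation_invariant_def by metis
  also have "\<dots> = \<rho> 0 x" by simp
  also have "\<dots> = \<rho> x 0" using assms(1) unfolding is_metric_def by metis
  finally show ?thesis .
qed

lemma tinv_nat_mult:
  assumes "is_metric \<rho>" "translation_invariant \<rho>"
  shows "\<rho> (real m *\<^sub>R x) 0 \<le> real m * \<rho> x 0"
proof (induction m)
  case 0
  then show ?case using assms(1) unfolding is_metric_def by (metis mult_zero_left of_nat_0 order_refl scale_zero_left)
next
  case (Suc m)
  have "\<rho> (real (Suc m) *\<^sub>R x) 0 = \<rho> (real m *\<^sub>R x + x) 0" by (simp add: algebra_simps)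
  also have "\<dots> \<le> \<rho> (real m *\<^sub>R x) 0 + \<rho> x 0" by (rule tinv_tri[OF assms])
  also have "\<dots> \<le> real (Suc m) * \<rho> x 0" using Suc by (simp add: algebra_simps)
  finally show ?case .
qed

lemma scal_cont0:
  assumes "metric_vector_space \<rho>" "\<tau> > 0"
  shows "\<exists>\<delta>>0. \<exists>s>0. \<forall>t x. \<bar>t\<bar> \<le> \<delta> \<and> \<rho> x 0 \<le> s \<longrightarrow> \<rho> (t *\<^sub>R x) 0 < \<tau>"
proof (rule ccontr)
  assume H: "\<not> ?thesis"
  have "\<forall>j::nat. \<exists>t x. \<bar>t\<bar> \<le> inverse (real (Suc j)) \<and> \<rho> x 0 \<le> inverse (real (Suc j)) \<and> \<tau> \<le> \<rho> (t *\<^sub>R x) 0"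
  proof
    fix j :: nat
    have p: "inverse (real (Suc j)) > 0" by simp
    show "\<exists>t x. \<bar>t\<bar> \<le> inverse (real (Suc j)) \<and> \<rho> x 0 \<le> inverse (real (Suc j)) \<and> \<tau> \<le> \<rho> (t *\<^sub>R x) 0"
      using H p by (meson not_less)
  qed
  then obtain tt xx where tx: "\<And>j. \<bar>tt j\<bar> \<le> inverse (real (Suc j)) \<and> \<rho> (xx j) 0 \<le> inverse (real (Suc j)) \<and> \<tau> \<le> \<rho> (tt j *\<^sub>R xx j) 0"
    by metis
  have m: "is_metric \<rho>" using assms(1) unfolding metric_vector_space_def by blast
  have "tt \<longlonglongrightarrow> 0"
    by (rule Lim_null_comparison[OF _ LIMSEQ_inverse_real_of_nat]) (use tx in simp)
  moreover have "(\<lambda>j. \<rho> (xx j) 0) \<longlonglongrightarrow> 0"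
    by (rule Lim_null_comparison[OF _ LIMSEQ_inverse_real_of_nat]) (use tx m in \<open>simp add: is_metric_def\<close>)
  ultimately have "(\<lambda>n. \<rho> (tt n *\<^sub>R xx n) (0 *\<^sub>R 0)) \<longlonglongrightarrow> 0"
    using assms(1) unfolding metric_vector_space_def by blast
  hence "eventually (\<lambda>n. \<rho> (tt n *\<^sub>R xx n) 0 < \<tau>) sequentially"
    using order_tendstoD(2)[OF _ assms(2)] by simp
  then obtain N where "\<And>n. n \<ge> N \<Longrightarrow> \<rho> (tt n *\<^sub>R xx n) 0 < \<tau>" by (auto simp: eventually_sequentially)
  with tx[of N] show False by force
qed

lemma bounded_small:
  assumes "metric_vector_space \<rho>" "metric_vs_bounded \<rho> A" "\<tau> > 0"
  shows "\<exists>M::nat. \<forall>m\<ge>M. \<forall>a\<in>A. \<rho> (inverse (real m) *\<^sub>R a) 0 < \<tau>"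
proof -
  obtain \<delta> s where ds: "\<delta> > 0" "s > 0" "\<And>t x. \<bar>t\<bar> \<le> \<delta> \<Longrightarrow> \<rho> x 0 \<le> s \<Longrightarrow> \<rho> (t *\<^sub>R x) 0 < \<tau>"
    using scal_cont0[OF assms(1,3)] by blast
  obtain c where c: "c > 0" "A \<subseteq> (\<lambda>x. c *\<^sub>R x) ` {x. \<rho> x 0 \<le> s}"
    using assms(2) ds(2) unfolding metric_vs_bounded_def by blast
  obtain M :: nat where M: "real M > c / \<delta>" using reals_Archimedean2 by blast
  show ?thesis
  proof (intro exI allI impI ballI)
    fix m a assume mM: "m \<ge> M" and a: "a \<in> A"
    then obtain b where b: "\<rho> b 0 \<le> s" "a = c *\<^sub>R b" using c by blast
    have mpos: "real m > 0" using M mM c ds(1)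
      by (smt (verit, ccfv_SIG) divide_pos_pos of_nat_le_iff)
    have "c / real m \<le> \<delta>" using M mM mpos ds(1)
      by (smt (verit, ccfv_SIG) divide_le_eq mult.commute of_nat_le_iff pos_divide_less_eq)
    hence "\<bar>inverse (real m) * c\<bar> \<le> \<delta>" using c mpos by (simp add: field_simps)
    hence "\<rho> ((inverse (real m) * c) *\<^sub>R b) 0 < \<tau>" using ds(3) b(1) by blast
    thus "\<rho> (inverse (real m) *\<^sub>R a) 0 < \<tau>" using b(2) by simp
  qed
qed

lemma op_cont0:
  assumes "metric_vector_space \<rho>" "metric_vector_space d"
    and "linear T" "linear Tn" "continuous_op \<rho> d T" "continuous_op \<rho> d Tn" "\<eta> > 0"
  shows "\<exists>\<delta>>0. \<forall>v. \<rho> v 0 \<le> \<delta> \<longrightarrow> d (Tn v - T v) 0 < \<eta>"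
proof (rule ccontr)
  assume H: "\<not> ?thesis"
  have "\<forall>j::nat. \<exists>v. \<rho> v 0 \<le> inverse (real (Suc j)) \<and> \<eta> \<le> d (Tn v - T v) 0"
  proof
    fix j :: nat
    have p: "inverse (real (Suc j)) > 0" by simp
    show "\<exists>v. \<rho> v 0 \<le> inverse (real (Suc j)) \<and> \<eta> \<le> d (Tn v - T v) 0"
      using H p by (meson not_less)
  qed
  then obtain vv where vv: "\<And>j. \<rho> (vv j) 0 \<le> inverse (real (Suc j)) \<and> \<eta> \<le> d (Tn (vv j) - T (vv j)) 0"
    by metis
  have m: "is_metric \<rho>" using assms(1) unfolding metric_vector_space_def by blast
  have md: "is_metric d" "translation_invariant d" using assms(2) unfolding metric_vector_space_def by blast+
  have "(\<lambda>j. \<rho> (vv j) 0) \<longlonglongrightarrow> 0"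
    by (rule Lim_null_comparison[OF _ LIMSEQ_inverse_real_of_nat]) (use vv m in \<open>simp add: is_metric_def\<close>)
  hence "(\<lambda>j. d (Tn (vv j)) (Tn 0)) \<longlonglongrightarrow> 0" and "(\<lambda>j. d (T (vv j)) (T 0)) \<longlonglongrightarrow> 0"
    using assms(5,6) unfolding continuous_op_def by blast+
  hence a1: "(\<lambda>j. d (Tn (vv j)) 0) \<longlonglongrightarrow> 0" and a2: "(\<lambda>j. d (T (vv j)) 0) \<longlonglongrightarrow> 0"
    using assms(3,4) by (simp_all add: linear_0)
  have sl: "(\<lambda>j. d (Tn (vv j)) 0 + d (T (vv j)) 0) \<longlonglongrightarrow> 0"
    using tendsto_add[OF a1 a2] by simp
  have le: "\<And>j. d (Tn (vv j) - T (vv j)) 0 \<le> d (Tn (vv j)) 0 + d (T (vv j)) 0"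
    using tinv_tri[OF md, of "Tn (vv _)" "- T (vv _)"] tinv_neg[OF md] by simp
  have "(\<lambda>j. d (Tn (vv j) - T (vv j)) 0) \<longlonglongrightarrow> 0"
    apply (rule Lim_null_comparison[OF _ sl])
    apply (intro always_eventually allI)
    using le md(1) unfolding is_metric_def by (metis abs_of_nonneg real_norm_def)
  hence "eventually (\<lambda>n. d (Tn (vv n) - T (vv n)) 0 < \<eta>) sequentially"
    using order_tendstoD(2)[OF _ assms(7)] by blast
  then obtain N where "\<And>n. n \<ge> N \<Longrightarrow> d (Tn (vv n) - T (vv n)) 0 < \<eta>" by (auto simp: eventually_sequentially)
  with vv[of N] show False by force
qed


lemma rev_tri:
  assumes "is_metric d" "translation_invariant d"
  shows "d b 0 \<le> d (a + b + c) 0 + d a 0 + d c 0"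
proof -
  have "b = (a + b + c) + (- a) + (- c)" by simp
  hence "d b 0 = d ((a + b + c) + (- a) + (- c)) 0" by simp
  also have "\<dots> \<le> d ((a + b + c) + (- a)) 0 + d (- c) 0" by (rule tinv_tri[OF assms])
  also have "\<dots> \<le> d (a + b + c) 0 + d (- a) 0 + d (- c) 0" by (rule add_right_mono[OF tinv_tri[OF assms]])
  finally show ?thesis using tinv_neg[OF assms] by simp
qed

lemma dir2:
  fixes \<rho> :: "'a::real_vector \<Rightarrow> 'a \<Rightarrow> real"
    and d :: "'b::real_vector \<Rightarrow> 'b \<Rightarrow> real"
    and T :: "'a \<Rightarrow> 'b" and Ts :: "nat \<Rightarrow> 'a \<Rightarrow> 'b"
  assumes mr: "metric_vector_space \<rho>" and cr: "metric_complete \<rho>"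
    and md: "metric_vector_space d"
    and lT: "linear T" and cT: "continuous_op \<rho> d T"
    and lTs: "\<And>n. linear (Ts n)" and cTs: "\<And>n. continuous_op \<rho> d (Ts n)"
    and pw: "pointwise_conv d Ts T" and nb: "\<not> bounded_conv \<rho> d Ts T"
  shows "almost_arbitrarily_slowly d Ts T"
  unfolding almost_arbitrarily_slowly_def
proof (intro conjI allI impI)
  show "pointwise_conv d Ts T" by (rule pw)
  fix \<epsilon> :: "nat \<Rightarrow> real"
  assume "antimono \<epsilon> \<and> (\<forall>n. 0 \<le> \<epsilon> n) \<and> \<epsilon> \<longlonglongrightarrow> 0"
  hence eps: "\<epsilon> \<longlonglongrightarrow> 0" by blast
  have mdd: "is_metric d" "translation_invariant d" using md unfolding metric_vector_space_def by blast+
  have mrr: "is_metric \<rho>" "translation_invariant \<rho>" using mr unfolding metric_vector_space_def by blast+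
  have dtr: "\<And>n x. d (Ts n x) (T x) = d (Ts n x - T x) 0" using tinv_eq[OF mdd(2)] by blast
  have rtr: "\<And>x y. \<rho> x y = \<rho> (x - y) 0" using tinv_eq[OF mrr(2)] by blast
  have rsym: "\<And>x y. \<rho> x y = \<rho> y x" using mrr(1) unfolding is_metric_def by blast
  have rnn: "\<And>x y. 0 \<le> \<rho> x y" using mrr(1) unfolding is_metric_def by blast
  have rtri: "\<And>x y z. \<rho> x z \<le> \<rho> x y + \<rho> y z" using mrr(1) unfolding is_metric_def by blast
  have lS: "\<And>n. linear (\<lambda>x. Ts n x - T x)" using linear_compose_sub[OF lTs lT] by blast
  obtain A e where bA: "metric_vs_bounded \<rho> A" and e: "e > 0"
    and unb: "\<And>N. \<exists>n\<ge>N. \<exists>a\<in>A. e \<le> d (Ts n a - T a) 0"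
    using nb unfolding bounded_conv_def by (auto simp: dtr not_less)
  have step: "\<forall>n s \<Delta>. \<exists>n' w c \<delta>. \<Delta> > 0 \<longrightarrow>
      n' > n \<and> \<rho> w 0 < \<Delta> / 2 \<and> c > 0 \<and> c \<le> d (Ts n' w - T w) 0 \<and> \<epsilon> n' \<le> c / 2
      \<and> d (Ts n' s - T s) 0 < c / 4 \<and> \<delta> > 0 \<and> (\<forall>v. \<rho> v 0 \<le> \<delta> \<longrightarrow> d (Ts n' v - T v) 0 < c / 4)"
  proof (intro allI)
    fix n :: nat and s :: 'a and \<Delta> :: real
    show "\<exists>n' w c \<delta>. \<Delta> > 0 \<longrightarrow>
      n' > n \<and> \<rho> w 0 < \<Delta> / 2 \<and> c > 0 \<and> c \<le> d (Ts n' w - T w) 0 \<and> \<epsilon> n' \<le> c / 2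
      \<and> d (Ts n' s - T s) 0 < c / 4 \<and> \<delta> > 0 \<and> (\<forall>v. \<rho> v 0 \<le> \<delta> \<longrightarrow> d (Ts n' v - T v) 0 < c / 4)"
    proof (cases "\<Delta> > 0")
      case False then show ?thesis by blast
    next
      case True
      obtain M where M: "\<forall>m\<ge>M. \<forall>a\<in>A. \<rho> (inverse (real m) *\<^sub>R a) 0 < \<Delta> / 2"
        using bounded_small[OF mr bA, of "\<Delta>/2"] True by auto
      define m where "m = Suc M"
      define c where "c = e / real m"
      have mpos: "real m > 0" unfolding m_def by simp
      have cpos: "c > 0" unfolding c_def using e mpos by simp
      have ev1: "eventually (\<lambda>n. \<epsilon> n < c / 2) sequentially"
        using order_tendstoD(2)[OF eps, of "c/2"] cpos by simp
      have "(\<lambda>n. d (Ts n s - T s) 0) \<longlonglongrightarrow> 0" using pw unfolding pointwise_conv_def by (simp add: dtr)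
      hence ev2: "eventually (\<lambda>n. d (Ts n s - T s) 0 < c / 4) sequentially"
        using order_tendstoD(2)[of _ 0 sequentially "c/4"] cpos by simp
      obtain N0 where N0: "\<And>n. n \<ge> N0 \<Longrightarrow> \<epsilon> n < c / 2 \<and> d (Ts n s - T s) 0 < c / 4"
        using eventually_conj[OF ev1 ev2] by (auto simp: eventually_sequentially)
      obtain n' a where n': "n' \<ge> max N0 (Suc n)" and a: "a \<in> A" and ea: "e \<le> d (Ts n' a - T a) 0"
        using unb by blast
      define w where "w = inverse (real m) *\<^sub>R a"
      have "m \<ge> M" unfolding m_def by simp
      hence wsmall: "\<rho> w 0 < \<Delta> / 2" using M a unfolding w_def by blast
      have "Ts n' a - T a = real m *\<^sub>R (Ts n' w - T w)"
        unfolding w_def using linear_scale[OF lS[of n'], of "inverse (real m)" a] mpos by simp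
      hence "e \<le> real m * d (Ts n' w - T w) 0" using ea tinv_nat_mult[OF mdd, of m "Ts n' w - T w"] by simp
      hence cle: "c \<le> d (Ts n' w - T w) 0" unfolding c_def using mpos by (simp add: divide_le_eq mult.commute)
      obtain \<delta> where \<delta>: "\<delta> > 0" "\<forall>v. \<rho> v 0 \<le> \<delta> \<longrightarrow> d (Ts n' v - T v) 0 < c / 4"
        using op_cont0[OF mr md lT lTs cT cTs, of "c/4" n'] cpos by auto
      show ?thesis
        apply (rule exI[of _ n'], rule exI[of _ w], rule exI[of _ c], rule exI[of _ \<delta>])
        using n' N0[of n'] wsmall cpos cle \<delta> by auto
    qed
  qed
  then obtain nf wf cf df where F: "\<And>n s \<Delta>. \<Delta> > 0 \<Longrightarrow>
      nf n s \<Delta> > n \<and> \<rho> (wf n s \<Delta>) 0 < \<Delta> / 2 \<and> cf n s \<Delta> > 0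
      \<and> cf n s \<Delta> \<le> d (Ts (nf n s \<Delta>) (wf n s \<Delta>) - T (wf n s \<Delta>)) 0 \<and> \<epsilon> (nf n s \<Delta>) \<le> cf n s \<Delta> / 2
      \<and> d (Ts (nf n s \<Delta>) s - T s) 0 < cf n s \<Delta> / 4 \<and> df n s \<Delta> > 0
      \<and> (\<forall>v. \<rho> v 0 \<le> df n s \<Delta> \<longrightarrow> d (Ts (nf n s \<Delta>) v - T v) 0 < cf n s \<Delta> / 4)"
    by metis
  define st where "st = rec_nat (0::nat, 0::'a, 1::real)
     (\<lambda>k p. (nf (fst p) (fst (snd p)) (snd (snd p)),
             fst (snd p) + wf (fst p) (fst (snd p)) (snd (snd p)),
             min (snd (snd p) / 2) (df (fst p) (fst (snd p)) (snd (snd p)))))"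
  define nn where "nn k = fst (st k)" for k
  define sv where "sv k = fst (snd (st k))" for k
  define D where "D k = snd (snd (st k))" for k
  define NN where "NN k = nf (nn k) (sv k) (D k)" for k
  define W where "W k = wf (nn k) (sv k) (D k)" for k
  define C where "C k = cf (nn k) (sv k) (D k)" for k
  define Dl where "Dl k = df (nn k) (sv k) (D k)" for k
  have st0: "nn 0 = 0" "sv 0 = 0" "D 0 = 1" unfolding nn_def sv_def D_def st_def by simp_all
  have stS: "nn (Suc k) = NN k" "sv (Suc k) = sv k + W k" "D (Suc k) = min (D k / 2) (Dl k)" for k
    unfolding nn_def sv_def D_def st_def NN_def W_def Dl_def by simp_all
  have Dpos: "D k > 0" for k
  proof (induction k)
    case 0 then show ?case using st0 by simp
  next
    case (Suc k) then show ?case using F[of "D k" "nn k" "sv k"] stS unfolding Dl_def by simp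
  qed
  have Fk: "NN k > nn k \<and> \<rho> (W k) 0 < D k / 2 \<and> C k > 0
      \<and> C k \<le> d (Ts (NN k) (W k) - T (W k)) 0 \<and> \<epsilon> (NN k) \<le> C k / 2
      \<and> d (Ts (NN k) (sv k) - T (sv k)) 0 < C k / 4 \<and> Dl k > 0
      \<and> (\<forall>v. \<rho> v 0 \<le> Dl k \<longrightarrow> d (Ts (NN k) v - T v) 0 < C k / 4)" for k
    unfolding NN_def W_def C_def Dl_def using F[OF Dpos[of k]] by blast
  have smNN: "strict_mono NN"
    by (rule strict_monoI_Suc) (use Fk stS(1) in \<open>metis\<close>)
  have Dhalf: "D k \<le> (1/2) ^ k" for k
  proof (induction k)
    case 0 then show ?case using st0 by simp
  next
    case (Suc k) then show ?case using stS(3)[of k] by simp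
  qed
  have inv: "\<rho> (sv m - sv k) 0 + D m \<le> D k" if "k \<le> m" for k m
    using that
  proof (induction m rule: dec_induct)
    case base
    have "\<rho> 0 0 = 0" using mrr(1) unfolding is_metric_def by blast
    then show ?case by simp
  next
    case (step m)
    have "\<rho> (sv (Suc m) - sv k) 0 = \<rho> ((sv m - sv k) + W m) 0" using stS(2)[of m] by (simp add: algebra_simps)
    also have "\<dots> \<le> \<rho> (sv m - sv k) 0 + \<rho> (W m) 0" by (rule tinv_tri[OF mrr])
    finally show ?case using step.IH Fk[of m] stS(3)[of m] by linarith
  qed
  have dist_sv: "\<rho> (sv m) (sv n) \<le> 2 * D N" if "m \<ge> N" "n \<ge> N" for m n N
  proof -
    have "\<rho> (sv m) (sv n) \<le> \<rho> (sv m) (sv N) + \<rho> (sv N) (sv n)" by (rule rtri)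
    also have "\<dots> = \<rho> (sv m - sv N) 0 + \<rho> (sv n - sv N) 0" using rtr rsym by metis
    also have "\<dots> \<le> 2 * D N" using inv[OF that(1)] inv[OF that(2)] Dpos[of m] Dpos[of n] by linarith
    finally show ?thesis .
  qed
  have "\<exists>x. (\<lambda>n. \<rho> (sv n) x) \<longlonglongrightarrow> 0"
    using cr unfolding metric_complete_def
  proof (elim allE impE)
    show "\<forall>r>0. \<exists>N. \<forall>m\<ge>N. \<forall>n\<ge>N. \<rho> (sv m) (sv n) < r"
    proof (intro allI impI)
      fix r :: real assume r: "r > 0"
      obtain N where N: "(1/2::real) ^ N < r / 2" using real_arch_pow_inv[of "r/2" "1/2"] r by auto
      show "\<exists>N. \<forall>m\<ge>N. \<forall>n\<ge>N. \<rho> (sv m) (sv n) < r"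
      proof (intro exI[of _ N] allI impI)
        fix m n assume "m \<ge> N" "n \<ge> N"
        thus "\<rho> (sv m) (sv n) < r" using dist_sv[of N m n] Dhalf[of N] N by linarith
      qed
    qed
  qed
  then obtain x where x: "(\<lambda>n. \<rho> (sv n) x) \<longlonglongrightarrow> 0" by blast
  have tail: "\<rho> (x - sv k) 0 \<le> D k" for k
  proof -
    have lim: "(\<lambda>m. \<rho> (sv m) x + D k) \<longlonglongrightarrow> D k" using tendsto_add[OF x tendsto_const[of "D k"]] by simp
    have "\<forall>m\<ge>k. \<rho> (x - sv k) 0 \<le> \<rho> (sv m) x + D k"
    proof (intro allI impI)
      fix m assume "m \<ge> k"
      have "\<rho> (x - sv k) 0 = \<rho> x (sv k)" by (rule rtr[symmetric])
      also have "\<dots> \<le> \<rho> x (sv m) + \<rho> (sv m) (sv k)" by (rule rtri)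
      also have "\<dots> \<le> \<rho> (sv m) x + D k"
      proof -
        have "\<rho> x (sv m) = \<rho> (sv m) x" by (rule rsym)
        moreover have "\<rho> (sv m) (sv k) = \<rho> (sv m - sv k) 0" by (rule rtr)
        ultimately show ?thesis using inv[OF \<open>m \<ge> k\<close>] Dpos[of m] by linarith
      qed
      finally show "\<rho> (x - sv k) 0 \<le> \<rho> (sv m) x + D k" .
    qed
    thus ?thesis using LIMSEQ_le_const[OF lim] by blast
  qed
  have main: "\<epsilon> (NN k) \<le> d (Ts (NN k) x) (T x)" for k
  proof -
    let ?n = "NN k"
    let ?S = "\<lambda>y. Ts ?n y - T y"
    define y where "y = x - sv (Suc k)"
    have eq: "x = sv k + W k + y" using stS(2)[of k] unfolding y_def by simp
    have "?S x = ?S (sv k) + ?S (W k) + ?S (x - sv (Suc k))"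
      unfolding y_def[symmetric] unfolding eq by (simp add: linear_add[OF lTs] linear_add[OF lT] algebra_simps)
    hence "d (?S (W k)) 0 \<le> d (?S x) 0 + d (?S (sv k)) 0 + d (?S (x - sv (Suc k))) 0"
      using rev_tri[OF mdd, of "?S (W k)" "?S (sv k)" "?S (x - sv (Suc k))"] by simp
    moreover have "\<rho> (x - sv (Suc k)) 0 \<le> Dl k" using tail[of "Suc k"] stS(3)[of k] by simp
    hence "d (?S (x - sv (Suc k))) 0 < C k / 4" using Fk[of k] by blast
    ultimately have "C k / 2 \<le> d (?S x) 0" using Fk[of k] by linarith
    thus ?thesis using Fk[of k] dtr[of "NN k" x] by linarith
  qed
  show "\<exists>x. \<exists>\<^sub>\<infinity>n. \<epsilon> n \<le> d (Ts n x) (T x)"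
  proof (intro exI[of _ x])
    show "\<exists>\<^sub>\<infinity>n. \<epsilon> n \<le> d (Ts n x) (T x)"
      unfolding INFM_nat
    proof
      fix m
      have "NN (Suc m) > m" using seq_suble[OF smNN, of "Suc m"] by simp
      thus "\<exists>n>m. \<epsilon> n \<le> d (Ts n x) (T x)" using main by blast
    qed
  qed
qed


lemma dir1:
  fixes \<rho> :: "'a::real_vector \<Rightarrow> 'a \<Rightarrow> real"
    and d :: "'b::real_vector \<Rightarrow> 'b \<Rightarrow> real"
    and T :: "'a \<Rightarrow> 'b" and Ts :: "nat \<Rightarrow> 'a \<Rightarrow> 'b"
  assumes mr: "metric_vector_space \<rho>" and lb: "locally_bounded \<rho>"
    and aas: "almost_arbitrarily_slowly d Ts T"
  shows "\<not> bounded_conv \<rho> d Ts T"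
proof
  assume bc: "bounded_conv \<rho> d Ts T"
  obtain U r where bU: "metric_vs_bounded \<rho> U" and r: "r > 0" and ball: "{x. \<rho> x 0 < r} \<subseteq> U"
    using lb unfolding locally_bounded_def by blast
  have mrr: "is_metric \<rho>" using mr unfolding metric_vector_space_def by blast
  define A where "A k = (\<lambda>x. real k *\<^sub>R x) ` U" for k :: nat
  have bA: "metric_vs_bounded \<rho> (A k)" if "k \<ge> 1" for k
    unfolding metric_vs_bounded_def
  proof (intro allI impI)
    fix r' :: real assume "r' > 0"
    then obtain c where c: "c > 0" "U \<subseteq> (\<lambda>x. c *\<^sub>R x) ` {x. \<rho> x 0 \<le> r'}"
      using bU unfolding metric_vs_bounded_def by blast
    have kc: "real k * c > 0" using that c by simp
    have "A k \<subseteq> (\<lambda>x. (real k * c) *\<^sub>R x) ` {x. \<rho> x 0 \<le> r'}"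
    proof
      fix y assume "y \<in> A k"
      then obtain u where u: "u \<in> U" "y = real k *\<^sub>R u" unfolding A_def by blast
      then obtain b where b: "\<rho> b 0 \<le> r'" "u = c *\<^sub>R b" using c by blast
      show "y \<in> (\<lambda>x. (real k * c) *\<^sub>R x) ` {x. \<rho> x 0 \<le> r'}"
        using u b by (intro image_eqI[of _ _ b]) auto
    qed
    thus "\<exists>c>0. A k \<subseteq> (\<lambda>x. c *\<^sub>R x) ` {x. \<rho> x 0 \<le> r'}" using kc by blast
  qed
  have cover: "\<exists>k\<ge>1. x \<in> A k" for x
  proof -
    have "\<rho> x x = 0" using mrr unfolding is_metric_def by blast
    hence "(\<lambda>j. \<rho> x x) \<longlonglongrightarrow> 0" by simp
    hence "(\<lambda>j. \<rho> (inverse (real (Suc j)) *\<^sub>R x) (0 *\<^sub>R x)) \<longlonglongrightarrow> 0"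
    proof -
      have sc: "\<forall>(as :: nat \<Rightarrow> real) xs a x. as \<longlonglongrightarrow> a \<and> (\<lambda>n. \<rho> (xs n) x) \<longlonglongrightarrow> 0
        \<longrightarrow> (\<lambda>n. \<rho> (as n *\<^sub>R xs n) (a *\<^sub>R x)) \<longlonglongrightarrow> 0" using mr unfolding metric_vector_space_def by blast
      show ?thesis using sc[rule_format, of "\<lambda>j. inverse (real (Suc j))" 0 "\<lambda>j. x" x]
        LIMSEQ_inverse_real_of_nat \<open>(\<lambda>j. \<rho> x x) \<longlonglongrightarrow> 0\<close> by blast
    qed
    hence "eventually (\<lambda>j. \<rho> (inverse (real (Suc j)) *\<^sub>R x) 0 < r) sequentially"
      using order_tendstoD(2)[OF _ r] by simp
    then obtain j where j: "\<rho> (inverse (real (Suc j)) *\<^sub>R x) 0 < r" by (auto simp: eventually_sequentially)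
    hence "inverse (real (Suc j)) *\<^sub>R x \<in> U" using ball by blast
    moreover have "x = real (Suc j) *\<^sub>R (inverse (real (Suc j)) *\<^sub>R x)" by simp
    ultimately have "x \<in> A (Suc j)" unfolding A_def by blast
    thus ?thesis by (intro exI[of _ "Suc j"]) simp
  qed
  have "\<forall>k e. \<exists>N. k \<ge> 1 \<and> e > 0 \<longrightarrow> (\<forall>n\<ge>N. \<forall>x\<in>A k. d (Ts n x) (T x) < e)"
    using bc bA unfolding bounded_conv_def by blast
  then obtain Nf where Nf: "\<And>k e n x. k \<ge> 1 \<Longrightarrow> e > 0 \<Longrightarrow> n \<ge> Nf k e \<Longrightarrow> x \<in> A k \<Longrightarrow> d (Ts n x) (T x) < e"
    by metis
  define G where "G j = j + (\<Sum>i\<le>j. \<Sum>k\<le>i. Nf k (inverse (real (Suc i))))" for j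
  have Gge: "Nf k (inverse (real (Suc j))) \<le> G j" if "k \<le> j" for k j
  proof -
    have "Nf k (inverse (real (Suc j))) \<le> (\<Sum>k'\<le>j. Nf k' (inverse (real (Suc j))))"
      by (rule member_le_sum) (use that in auto)
    also have "\<dots> \<le> (\<Sum>i\<le>j. \<Sum>k\<le>i. Nf k (inverse (real (Suc i))))"
      by (rule member_le_sum[where f="\<lambda>i. \<Sum>k\<le>i. Nf k (inverse (real (Suc i)))" and i=j]) auto
    finally show ?thesis unfolding G_def by simp
  qed
  define h where "h n = Max (insert 0 {j. G j \<le> n})" for n
  have fin: "finite (insert 0 {j. G j \<le> n})" for n
  proof -
    have "{j. G j \<le> n} \<subseteq> {..n}" unfolding G_def by auto
    thus ?thesis using finite_subset by blast
  qed
  have hge: "j \<le> h n" if "G j \<le> n" for j n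
    unfolding h_def using that fin by (intro Max_ge) auto
  have hin: "G (h n) \<le> n" if "h n \<noteq> 0" for n
  proof -
    have "h n \<in> insert 0 {j. G j \<le> n}" unfolding h_def using fin by (intro Max_in) auto
    thus ?thesis using that by auto
  qed
  have hmono: "h n \<le> h n'" if "n \<le> n'" for n n'
    unfolding h_def using that fin by (intro Max_mono) auto
  define \<epsilon> where "\<epsilon> n = inverse (real (Suc (h n)))" for n
  have am: "antimono \<epsilon>" unfolding antimono_def \<epsilon>_def
    using hmono by (auto intro!: le_imp_inverse_le)
  have enn: "\<forall>n. 0 \<le> \<epsilon> n" unfolding \<epsilon>_def by simp
  have elim: "\<epsilon> \<longlonglongrightarrow> 0"
  proof (rule LIMSEQ_I)
    fix e :: real assume "e > 0"
    then obtain J where J: "J > 0" "inverse (real J) < e" using ex_inverse_of_nat_less by blast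
    show "\<exists>no. \<forall>n\<ge>no. norm (\<epsilon> n - 0) < e"
    proof (intro exI[of _ "G J"] allI impI)
      fix n assume "n \<ge> G J"
      hence "J \<le> h n" using hge by blast
      hence "\<epsilon> n \<le> inverse (real J)" unfolding \<epsilon>_def using J(1) by (auto intro!: le_imp_inverse_le)
      thus "norm (\<epsilon> n - 0) < e" using J(2) enn by simp
    qed
  qed
  obtain x where fr: "\<exists>\<^sub>\<infinity>n. \<epsilon> n \<le> d (Ts n x) (T x)"
    using aas am enn elim unfolding almost_arbitrarily_slowly_def by blast
  obtain k where k: "k \<ge> 1" "x \<in> A k" using cover by blast
  obtain n where n: "n \<ge> G k" "\<epsilon> n \<le> d (Ts n x) (T x)" using fr unfolding INFM_nat_le by blast
  have hk: "k \<le> h n" using hge n(1) by blast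
  hence "h n \<noteq> 0" using k(1) by simp
  hence "G (h n) \<le> n" by (rule hin)
  hence "Nf k (inverse (real (Suc (h n)))) \<le> n" using Gge[OF hk] by linarith
  hence "d (Ts n x) (T x) < \<epsilon> n" unfolding \<epsilon>_def using Nf[OF k(1) _ _ k(2)] by simp
  with n(2) show False by simp
qed


theorem mainTheorem11:
  fixes \<rho> :: "'a::real_vector \<Rightarrow> 'a \<Rightarrow> real"
    and d :: "'b::real_vector \<Rightarrow> 'b \<Rightarrow> real"
    and T :: "'a \<Rightarrow> 'b" and Ts :: "nat \<Rightarrow> 'a \<Rightarrow> 'b"
  assumes "F_space \<rho>" and "locally_bounded \<rho>"
    and "metric_vector_space d" and "non_decreasing_metric d"
    and "linear T" and "continuous_op \<rho> d T"
    and "\<And>n. linear (Ts n)" and "\<And>n. continuous_op \<rho> d (Ts n)"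
  shows "almost_arbitrarily_slowly d Ts T \<longleftrightarrow>
           (pointwise_conv d Ts T \<and> \<not> bounded_conv \<rho> d Ts T)"
proof
  have mr: "metric_vector_space \<rho>" and cr: "metric_complete \<rho>"
    using assms(1) unfolding F_space_def by blast+
  {
    assume a: "almost_arbitrarily_slowly d Ts T"
    show "pointwise_conv d Ts T \<and> \<not> bounded_conv \<rho> d Ts T"
      using a dir1[OF mr assms(2) a] unfolding almost_arbitrarily_slowly_def by blast
  }
  {
    assume "pointwise_conv d Ts T \<and> \<not> bounded_conv \<rho> d Ts T"
    thus "almost_arbitrarily_slowly d Ts T"
      using dir2[OF mr cr assms(3,5,6), of Ts] assms(7,8) by blast
  }
qed

end
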